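(* Let $A,B\subseteq\Sigma^+$, $A'\subseteq A$ and $B'\subseteq B$. If $\langle A,B\rangle$ has a deduction tree of size $k$, then $\langle A',B'\rangle$ has a deduction tree of size $k$.
   Context: Let $AP$ be a finite set of atomic propositions and $\Sigma=2^{AP}$. For $\sigma=w_0\cdots w_m\in\Sigma^+$ and $j\le m$, $\sigma^{(j)}=w_j\cdots w_m$. For $A\subseteq\Sigma^+$: $A^{\mathsf X}=\{\sigma^{(1)}:\sigma\in A,|\sigma|\ge2\}$; $A^{\mathsf G}=\{\sigma^{(j)}:\sigma\in A,0\le j<|\sigma|\}$; a future point for $A$ is $f:A\to\mathbb N$ with $f(\sigma)<|\sigma|$ for all $\sigma$, and $A^f=\{\sigma^{(f(\sigma))}:\sigma\in A\}$. For a literal $\alpha\in\{p,\neg p: p\in AP\}$, $A\models\alpha$ means $\alpha$ holds at position $0$ of every trace in $A$ and $B\perp\alpha$ means it fails at position $0$ of every trace in $B$. Proof system on terms $\langle A,B\rangle$ ($A,B\subseteq\Sigma^+$): Atomic: $\langle A,B\rangle$ if $A\models\alpha$ and $B\perp\alpha$ for some literal $\alpha$; Or: $\langle A_1\uplus A_2,B\rangle$ from $\langle A_1,B\rangle,\langle A_2,B\rangle$; And: $\langle A,B_1\uplus B_2\rangle$ from $\langle A,B_1\rangle,\langle A,B_2\rangle$; Next: $\langle A,B\rangle$ from $\langle A^{\mathsf X},B^{\mathsf X}\rangle$ if $|A^{\mathsf X}|=|A|$; WeakNext: $\langle A,B\rangle$ from $\langle A^{\mathsf X},B^{\mathsf X}\rangle$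 if $|B^{\mathsf X}|=|B|$; Future: $\langle A,B\rangle$ from $\langle A^f,B^{\mathsf G}\rangle$ for a future point $f$ for $A$; Globally: $\langle A,B\rangle$ from $\langle A^{\mathsf G},B^f\rangle$ for a future point $f$ for $B$ ($\uplus$ = disjoint union). A deduction tree for $\langle A,B\rangle$ is a finite tree of rule applications with root conclusion $\langle A,B\rangle$ in which every hypothesis is derived by a rule application; its size is its number of rule applications. *)

theory Defs
  imports Main
begin

text \<open>Traces over \<Sigma> = 2^AP are lists of sets of atomic propositions; the
  atomic propositions form a finite type 'ap. Elements of \<Sigma>^+ are the
  nonempty lists.\<close>

type_synonym 'ap trace = "'ap set list"

definition nonempty_traces :: "'ap trace set \<Rightarrow> bool" where
  "nonempty_traces A \<longleftrightarrow> (\<forall>\<sigma>\<in>A. \<sigma> \<noteq> [])"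

text \<open>sigma^(j) = drop j sigma\<close>
definition nextS :: "'ap trace set \<Rightarrow> 'ap trace set" where
  "nextS A = {drop 1 \<sigma> | \<sigma>. \<sigma> \<in> A \<and> length \<sigma> \<ge> 2}"

definition globS :: "'ap trace set \<Rightarrow> 'ap trace set" where
  "globS A = {drop j \<sigma> | \<sigma> j. \<sigma> \<in> A \<and> j < length \<sigma>}"

definition future_point :: "'ap trace set \<Rightarrow> ('ap trace \<Rightarrow> nat) \<Rightarrow> bool" where
  "future_point A f \<longleftrightarrow> (\<forall>\<sigma>\<in>A. f \<sigma> < length \<sigma>)"

definition futS :: "'ap trace set \<Rightarrow> ('ap trace \<Rightarrow> nat) \<Rightarrow> 'ap trace set" where
  "futS A f = (\<lambda>\<sigma>. drop (f \<sigma>) \<sigma>) ` A"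

datatype 'ap literal = Pos 'ap | Neg 'ap

fun holds0 :: "'ap trace \<Rightarrow> 'ap literal \<Rightarrow> bool" where
  "holds0 \<sigma> (Pos p) \<longleftrightarrow> p \<in> \<sigma> ! 0"
| "holds0 \<sigma> (Neg p) \<longleftrightarrow> p \<notin> \<sigma> ! 0"

definition models :: "'ap trace set \<Rightarrow> 'ap literal \<Rightarrow> bool" where
  "models A \<alpha> \<longleftrightarrow> (\<forall>\<sigma>\<in>A. holds0 \<sigma> \<alpha>)"

definition perp :: "'ap trace set \<Rightarrow> 'ap literal \<Rightarrow> bool" where
  "perp B \<alpha> \<longleftrightarrow> (\<forall>\<sigma>\<in>B. \<not> holds0 \<sigma> \<alpha>)"

inductive has_tree :: "('ap::finite) trace set \<Rightarrow> 'ap trace set \<Rightarrow> nat \<Rightarrow> bool" where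
  Atomic: "models A \<alpha> \<Longrightarrow> perp B \<alpha> \<Longrightarrow> has_tree A B 1"
| Or: "A1 \<inter> A2 = {} \<Longrightarrow> has_tree A1 B k1 \<Longrightarrow> has_tree A2 B k2
         \<Longrightarrow> has_tree (A1 \<union> A2) B (k1 + k2 + 1)"
| And: "B1 \<inter> B2 = {} \<Longrightarrow> has_tree A B1 k1 \<Longrightarrow> has_tree A B2 k2
         \<Longrightarrow> has_tree A (B1 \<union> B2) (k1 + k2 + 1)"
| Next: "card (nextS A) = card A \<Longrightarrow> has_tree (nextS A) (nextS B) k
         \<Longrightarrow> has_tree A B (k + 1)"
| WeakNext: "card (nextS B) = card B \<Longrightarrow> has_tree (nextS A) (nextS B) k
         \<Longrightarrow> has_tree A B (k + 1)"
| Future: "future_point A f \<Longrightarrow> has_tree (futS A f) (globS B) k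
         \<Longrightarrow> has_tree A B (k + 1)"
| Globally: "future_point B f \<Longrightarrow> has_tree (globS A) (futS B f) k
         \<Longrightarrow> has_tree A B (k + 1)"

end

theory Submission
  imports Defs
begin

lemma nextS_img: "nextS A = drop 1 ` {s\<in>A. 2 \<le> length s}"
  unfolding nextS_def by auto

lemma nextS_mono: "A' \<subseteq> A \<Longrightarrow> nextS A' \<subseteq> nextS A"
  unfolding nextS_def by auto

lemma globS_mono: "A' \<subseteq> A \<Longrightarrow> globS A' \<subseteq> globS A"
  unfolding globS_def by auto

lemma futS_mono: "A' \<subseteq> A \<Longrightarrow> futS A' f \<subseteq> futS A f"
  unfolding futS_def by auto

lemma nextS_finite: "finite A \<Longrightarrow> finite (nextS A)"
  unfolding nextS_img by auto

lemma futS_finite: "finite A \<Longrightarrow> finite (futS A f)"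
  unfolding futS_def by auto

lemma globS_finite: "finite A \<Longrightarrow> finite (globS A)"
proof -
  assume f: "finite A"
  have "globS A = (\<lambda>(s,j). drop j s) ` (SIGMA s:A. {..<length s})"
    unfolding globS_def by auto
  thus ?thesis using f by auto
qed

lemma nextS_card:
  assumes f: "finite A" and c: "card (nextS A) = card A" and s: "A' \<subseteq> A"
  shows "card (nextS A') = card A'"
proof -
  let ?S = "{s\<in>A. 2 \<le> length s}"
  have fS: "finite ?S" using f by auto
  have 1: "card (nextS A) \<le> card ?S" unfolding nextS_img using card_image_le fS by blast
  have 2: "card ?S \<le> card A" using f by (intro card_mono) auto
  have eqS: "?S = A" using card_subset_eq[OF f, of ?S] 1 2 c by auto
  have inj: "inj_on (drop 1) A"
    using eq_card_imp_inj_on[OF fS] c eqS unfolding nextS_img by metis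
  have "nextS A' = drop 1 ` A'" unfolding nextS_img using eqS s by auto
  thus ?thesis using card_image inj_on_subset[OF inj s] by metis
qed

lemma main:
  "has_tree A B k \<Longrightarrow> finite A \<Longrightarrow> finite B \<Longrightarrow> A' \<subseteq> A \<Longrightarrow> B' \<subseteq> B \<Longrightarrow> has_tree A' B' k"
proof (induction arbitrary: A' B' rule: has_tree.induct)
  case (Atomic A \<alpha> B)
  then show ?case using has_tree.Atomic[of A' \<alpha> B'] unfolding models_def perp_def by blast
next
  case (Or A1 A2 B k1 k2)
  have "has_tree (A' \<inter> A1) B' k1" using Or.IH(1)[of "A' \<inter> A1" B'] Or.prems by auto
  moreover have "has_tree (A' \<inter> A2) B' k2" using Or.IH(2)[of "A' \<inter> A2" B'] Or.prems by auto
  ultimately have "has_tree ((A' \<inter> A1) \<union> (A' \<inter> A2)) B' (k1 + k2 + 1)"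
    using has_tree.Or[of "A' \<inter> A1" "A' \<inter> A2"] Or.hyps(1) by blast
  moreover have "(A' \<inter> A1) \<union> (A' \<inter> A2) = A'" using Or by auto
  ultimately show ?case by simp
next
  case (And B1 B2 A k1 k2)
  have "has_tree A' (B' \<inter> B1) k1" using And.IH(1)[of A' "B' \<inter> B1"] And.prems by auto
  moreover have "has_tree A' (B' \<inter> B2) k2" using And.IH(2)[of A' "B' \<inter> B2"] And.prems by auto
  ultimately have "has_tree A' ((B' \<inter> B1) \<union> (B' \<inter> B2)) (k1 + k2 + 1)"
    using has_tree.And[of "B' \<inter> B1" "B' \<inter> B2"] And.hyps(1) by blast
  moreover have "(B' \<inter> B1) \<union> (B' \<inter> B2) = B'" using And by auto
  ultimately show ?case by simp
next
  case (Next A B k)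
  have "has_tree (nextS A') (nextS B') k"
    by (rule Next.IH[OF nextS_finite[OF Next.prems(1)] nextS_finite[OF Next.prems(2)] nextS_mono[OF Next.prems(3)] nextS_mono[OF Next.prems(4)]])
  moreover have "card (nextS A') = card A'" using nextS_card[OF Next.prems(1) Next.hyps(1) Next.prems(3)] .
  ultimately show ?case using has_tree.Next by blast
next
  case (WeakNext B A k)
  have "has_tree (nextS A') (nextS B') k"
    by (rule WeakNext.IH[OF nextS_finite[OF WeakNext.prems(1)] nextS_finite[OF WeakNext.prems(2)] nextS_mono[OF WeakNext.prems(3)] nextS_mono[OF WeakNext.prems(4)]])
  moreover have "card (nextS B') = card B'" using nextS_card[OF WeakNext.prems(2) WeakNext.hyps(1) WeakNext.prems(4)] .
  ultimately show ?case using has_tree.WeakNext by blast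
next
  case (Future A f B k)
  have "has_tree (futS A' f) (globS B') k"
    by (rule Future.IH[OF futS_finite[OF Future.prems(1)] globS_finite[OF Future.prems(2)] futS_mono[OF Future.prems(3)] globS_mono[OF Future.prems(4)]])
  moreover have "future_point A' f" using Future unfolding future_point_def by blast
  ultimately show ?case using has_tree.Future by blast
next
  case (Globally B f A k)
  have "has_tree (globS A') (futS B' f) k"
    by (rule Globally.IH[OF globS_finite[OF Globally.prems(1)] futS_finite[OF Globally.prems(2)] globS_mono[OF Globally.prems(3)] futS_mono[OF Globally.prems(4)]])
  moreover have "future_point B' f" using Globally unfolding future_point_def by blast
  ultimately show ?case using has_tree.Globally by blast
qed

theorem lemma10:
  fixes A B A' B' :: "('ap::finite) trace set" and k :: nat
  assumes "finite A" and "finite B"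
    and "nonempty_traces A" and "nonempty_traces B"
    and "A' \<subseteq> A" and "B' \<subseteq> B"
    and "has_tree A B k"
  shows "has_tree A' B' k"
  using main[OF assms(7,1,2,5,6)] .

end
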